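(* Let $p,q\in[1,\infty)$. Without the Objectivity Assumption, the $L(p,q)$-aggregation method is not continuous as a function of the score vectors: there exist data (reviewers, papers, score vectors and recommendations satisfying the standing assumptions) such that, keeping all recommendations fixed, the map sending the score vectors $(\bar x_{ia})_{i,a}$ to the solution vector $(s_a)_{a\in\mathcal P}$ is discontinuous at these score vectors.
   Context: Peer-review setting: a finite set $\mathcal{R}$ of reviewers, a finite set $\mathcal{P}$ of papers, and $d\ge1$ criteria. Every reviewer $i$ reviews every paper $a$, giving a score vector $\bar{x}_{ia}\in[0,10]^d$ and a recommendation $y_{ia}\in[0,10]$. A function $h:[0,10]^d\to[0,10]$ is monotonic if $\bar x\le\bar y$ componentwise implies $h(\bar x)\le h(\bar y)$. Standing assumption: each reviewer $i$ has a monotonic $h_i$ with $y_{ia}=h_i(\bar x_{ia})$ for all $a$. Score vectors of different reviewers for the same paper may differ (no Objectivity Assumption). The $L(p,q)$-aggregation method: (1) ERM step: find a monotonic $\hat h$ minimizing $\big[\sum_{i\in\mathcal{R}}\big(\sum_{a\in\mathcal{P}}|y_{ia}-h(\bar x_{ia})|^p\big)^{q/p}\big]^{1/q}$ over monotonic $h$ (only the values $h(\bar x_{ia})$ matter); among minimizers the value vector $(\hat h(\bar x_{ia}))_{i,a}$ of smallest Euclidean norm is chosen; set $\hat y_{ia}=\hat h(\bar x_{ia})$. (2) Aggregation step: the solution $(s_a)_{a\in\mathcal P}$ minimizes $\big[\sum_{i}\big(\sum_{a}|\hat y_{ia}-s_a|^p\big)^{q/p}\big]^{1/q}$ (ties broken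 by smallest Euclidean norm). *)

theory Defs
  imports Complex_Main
begin

text \<open>Reviewers are indexed by i < m, papers by a < n, criteria by k < d.
  A score vector is a function nat => real whose relevant components are those k < d.\<close>

definition score_box :: "nat \<Rightarrow> (nat \<Rightarrow> real) set" where
  "score_box d = {u. \<forall>k<d. 0 \<le> u k \<and> u k \<le> 10}"

definition monotonic_fn :: "nat \<Rightarrow> ((nat \<Rightarrow> real) \<Rightarrow> real) \<Rightarrow> bool" where
  "monotonic_fn d h \<longleftrightarrow>
     (\<forall>u\<in>score_box d. 0 \<le> h u \<and> h u \<le> 10) \<and>
     (\<forall>u\<in>score_box d. \<forall>v\<in>score_box d. (\<forall>k<d. u k \<le> v k) \<longrightarrow> h u \<le> h v)"

definition Lpq_loss :: "real \<Rightarrow> real \<Rightarrow> nat \<Rightarrow> nat \<Rightarrow>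
    (nat \<Rightarrow> nat \<Rightarrow> real) \<Rightarrow> (nat \<Rightarrow> nat \<Rightarrow> real) \<Rightarrow> real" where
  "Lpq_loss p q m n y v =
     (\<Sum>i<m. (\<Sum>a<n. \<bar>y i a - v i a\<bar> powr p) powr (q / p)) powr (1 / q)"

definition erm_feasible :: "nat \<Rightarrow> nat \<Rightarrow> nat \<Rightarrow> (nat \<Rightarrow> nat \<Rightarrow> nat \<Rightarrow> real) \<Rightarrow>
    (nat \<Rightarrow> nat \<Rightarrow> real) \<Rightarrow> bool" where
  "erm_feasible d m n x v \<longleftrightarrow>
     (\<exists>h. monotonic_fn d h \<and> (\<forall>i<m. \<forall>a<n. v i a = h (x i a))) \<and>
     (\<forall>i a. m \<le> i \<or> n \<le> a \<longrightarrow> v i a = 0)"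

definition sqnorm2 :: "nat \<Rightarrow> nat \<Rightarrow> (nat \<Rightarrow> nat \<Rightarrow> real) \<Rightarrow> real" where
  "sqnorm2 m n v = (\<Sum>i<m. \<Sum>a<n. (v i a)\<^sup>2)"

definition erm_step :: "real \<Rightarrow> real \<Rightarrow> nat \<Rightarrow> nat \<Rightarrow> nat \<Rightarrow>
    (nat \<Rightarrow> nat \<Rightarrow> nat \<Rightarrow> real) \<Rightarrow> (nat \<Rightarrow> nat \<Rightarrow> real) \<Rightarrow> (nat \<Rightarrow> nat \<Rightarrow> real)" where
  "erm_step p q d m n x y = (THE v. erm_feasible d m n x v \<and>
     (\<forall>w. erm_feasible d m n x w \<longrightarrow> Lpq_loss p q m n y v \<le> Lpq_loss p q m n y w) \<and>
     (\<forall>w. erm_feasible d m n x w \<and> Lpq_loss p q m n y w = Lpq_loss p q m n y v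
          \<longrightarrow> sqnorm2 m n v \<le> sqnorm2 m n w))"

definition aggregation_step :: "real \<Rightarrow> real \<Rightarrow> nat \<Rightarrow> nat \<Rightarrow>
    (nat \<Rightarrow> nat \<Rightarrow> real) \<Rightarrow> (nat \<Rightarrow> real)" where
  "aggregation_step p q m n yh = (THE s. (\<forall>a\<ge>n. s a = 0) \<and>
     (\<forall>t. (\<forall>a\<ge>n. t a = 0) \<longrightarrow>
          Lpq_loss p q m n yh (\<lambda>i a. s a) \<le> Lpq_loss p q m n yh (\<lambda>i a. t a)) \<and>
     (\<forall>t. (\<forall>a\<ge>n. t a = 0) \<and>
          Lpq_loss p q m n yh (\<lambda>i a. t a) = Lpq_loss p q m n yh (\<lambda>i a. s a)
          \<longrightarrow> (\<Sum>a<n. (s a)\<^sup>2) \<le> (\<Sum>a<n. (t a)\<^sup>2)))"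

definition Lpq_method :: "real \<Rightarrow> real \<Rightarrow> nat \<Rightarrow> nat \<Rightarrow> nat \<Rightarrow>
    (nat \<Rightarrow> nat \<Rightarrow> nat \<Rightarrow> real) \<Rightarrow> (nat \<Rightarrow> nat \<Rightarrow> real) \<Rightarrow> (nat \<Rightarrow> real)" where
  "Lpq_method p q d m n x y = aggregation_step p q m n (erm_step p q d m n x y)"

end

theory Submission
  imports Defs
begin

lemma pm_strict_pos:
  fixes r a b :: real
  assumes r: "1 < r" and a: "0 < a" and ab: "a < b"
  shows "2 * ((a+b)/2) powr r < a powr r + b powr r"
proof -
  define m where "m = (a+b)/2"
  have am: "a < m" and mb: "m < b" using ab by (auto simp: m_def)
  have D: "\<And>x. 0 < x \<Longrightarrow> ((\<lambda>z. z powr r) has_real_derivative r * x powr (r - 1)) (at x)"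
    by (rule has_real_derivative_powr)
  obtain z1 where z1: "a < z1" "z1 < m" "m powr r - a powr r = (m - a) * (r * z1 powr (r - 1))"
    using MVT2[OF am, of "\<lambda>z. z powr r" "\<lambda>x. r * x powr (r - 1)"] D a by force
  obtain z2 where z2: "m < z2" "z2 < b" "b powr r - m powr r = (b - m) * (r * z2 powr (r - 1))"
    using MVT2[OF mb, of "\<lambda>z. z powr r" "\<lambda>x. r * x powr (r - 1)"] D a am by force
  have "z1 powr (r - 1) < z2 powr (r - 1)"
    using z1 z2 a r by (intro powr_less_mono2) auto
  hence lt: "((b-a)/2 * r) * z1 powr (r - 1) < ((b-a)/2 * r) * z2 powr (r - 1)"
    using ab r by (intro mult_strict_left_mono) auto
  have e1: "m - a = (b-a)/2" and e2: "b - m = (b-a)/2" by (auto simp: m_def field_simps)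
  have "(m - a) * (r * z1 powr (r - 1)) < (b - m) * (r * z2 powr (r - 1))"
    unfolding e1 e2 using lt by (simp only: mult.assoc)
  hence "m powr r - a powr r < b powr r - m powr r" using z1 z2 by simp
  hence "2 * m powr r < a powr r + b powr r" by simp
  thus ?thesis by (simp add: m_def)
qed

lemma pm:
  fixes r a b :: real
  assumes r: "1 \<le> r" and a: "0 \<le> a" and b: "0 \<le> b"
  shows "2 * ((a+b)/2) powr r \<le> a powr r + b powr r"
    and "1 < r \<Longrightarrow> a \<noteq> b \<Longrightarrow> 2 * ((a+b)/2) powr r < a powr r + b powr r"
proof -
  have strict: "2 * ((a+b)/2) powr r < a powr r + b powr r" if "1 < r" "a < b" "0 \<le> a" for a b :: real
  proof (cases "a = 0")
    case True
    have "2 powr 1 < 2 powr r" using that by (intro powr_less_mono) auto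
    hence "2 < 2 powr r" by simp
    moreover have "0 < b powr r" using that by auto
    ultimately have "2 * b powr r < 2 powr r * b powr r" by simp
    hence "2 * (b powr r / 2 powr r) < b powr r" by (simp add: field_simps)
    thus ?thesis using True that by (simp add: powr_divide)
  next
    case False
    thus ?thesis using pm_strict_pos[of r a b] that by auto
  qed
  show "1 < r \<Longrightarrow> a \<noteq> b \<Longrightarrow> 2 * ((a+b)/2) powr r < a powr r + b powr r"
  proof -
    assume "1 < r" "a \<noteq> b"
    then consider "a < b" | "b < a" by linarith
    thus ?thesis using strict[of a b] strict[of b a] a b \<open>1 < r\<close> by (cases; simp add: add.commute)
  qed
  show "2 * ((a+b)/2) powr r \<le> a powr r + b powr r"
  proof (cases "r = 1 \<or> a = b")
    case True
    thus ?thesis by auto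
  next
    case False
    thus ?thesis using strict[of a b] strict[of b a] a b r by (cases "a < b"; simp add: add.commute)
  qed
qed

lemma all2: "(\<forall>k<(2::nat). P k) \<longleftrightarrow> P 0 \<and> P 1"
  by (auto simp: less_Suc_eq numeral_2_eq_2)

lemma loss_nonneg: "0 \<le> Lpq_loss p q m n y v"
  unfolding Lpq_loss_def by simp

lemma loss_zero_iff:
  assumes "0 < p" "0 < q"
  shows "Lpq_loss p q m n y v = 0 \<longleftrightarrow> (\<forall>i<m. \<forall>a<n. y i a = v i a)"
proof -
  have "Lpq_loss p q m n y v = 0 \<longleftrightarrow>
     (\<Sum>i<m. (\<Sum>a<n. \<bar>y i a - v i a\<bar> powr p) powr (q / p)) = 0"
    unfolding Lpq_loss_def by simp
  also have "\<dots> \<longleftrightarrow> (\<forall>i<m. (\<Sum>a<n. \<bar>y i a - v i a\<bar> powr p) powr (q / p) = 0)"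
    by (subst sum_nonneg_eq_0_iff) auto
  also have "\<dots> \<longleftrightarrow> (\<forall>i<m. (\<Sum>a<n. \<bar>y i a - v i a\<bar> powr p) = 0)"
    by simp
  also have "\<dots> \<longleftrightarrow> (\<forall>i<m. \<forall>a<n. \<bar>y i a - v i a\<bar> powr p = 0)"
    by (subst sum_nonneg_eq_0_iff) auto
  also have "\<dots> \<longleftrightarrow> (\<forall>i<m. \<forall>a<n. y i a = v i a)"
    by simp
  finally show ?thesis .
qed

lemma erm_zero:
  assumes pq: "0 < p" "0 < q"
    and feas: "erm_feasible d m n x v0" and eq: "\<forall>i<m. \<forall>a<n. v0 i a = y i a"
  shows "erm_step p q d m n x y = v0"
  unfolding erm_step_def
proof (rule the_equality)
  have L0: "Lpq_loss p q m n y v0 = 0" using eq loss_zero_iff[OF pq] by auto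
  show "erm_feasible d m n x v0 \<and>
    (\<forall>w. erm_feasible d m n x w \<longrightarrow> Lpq_loss p q m n y v0 \<le> Lpq_loss p q m n y w) \<and>
    (\<forall>w. erm_feasible d m n x w \<and> Lpq_loss p q m n y w = Lpq_loss p q m n y v0 \<longrightarrow>
         sqnorm2 m n v0 \<le> sqnorm2 m n w)"
  proof (intro conjI allI impI)
    show "erm_feasible d m n x v0" by fact
    fix w show "Lpq_loss p q m n y v0 \<le> Lpq_loss p q m n y w" using L0 loss_nonneg by simp
  next
    fix w assume "erm_feasible d m n x w \<and> Lpq_loss p q m n y w = Lpq_loss p q m n y v0"
    hence "\<forall>i<m. \<forall>a<n. y i a = w i a" using L0 loss_zero_iff[OF pq] by auto
    hence "sqnorm2 m n v0 = sqnorm2 m n w" unfolding sqnorm2_def using eq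
      by (intro sum.cong refl) auto
    thus "sqnorm2 m n v0 \<le> sqnorm2 m n w" by simp
  qed
next
  fix v assume H: "erm_feasible d m n x v \<and>
    (\<forall>w. erm_feasible d m n x w \<longrightarrow> Lpq_loss p q m n y v \<le> Lpq_loss p q m n y w) \<and>
    (\<forall>w. erm_feasible d m n x w \<and> Lpq_loss p q m n y w = Lpq_loss p q m n y v \<longrightarrow>
         sqnorm2 m n v \<le> sqnorm2 m n w)"
  have L0: "Lpq_loss p q m n y v0 = 0" using eq loss_zero_iff[OF pq] by auto
  have "Lpq_loss p q m n y v = 0" using H feas L0 loss_nonneg[of p q m n y v]
    by fastforce
  hence e2: "\<forall>i<m. \<forall>a<n. y i a = v i a" using loss_zero_iff[OF pq] by auto
  show "v = v0"
  proof (intro ext)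
    fix i a
    show "v i a = v0 i a"
    proof (cases "i < m \<and> a < n")
      case True thus ?thesis using e2 eq by auto
    next
      case False
      thus ?thesis using H feas unfolding erm_feasible_def by (metis not_le)
    qed
  qed
qed

lemma agg_zero:
  assumes pq: "0 < p" "0 < q" and m: "0 < m"
    and eq: "\<forall>i<m. \<forall>a<n. yh i a = t a" and t0: "\<forall>a\<ge>n. t a = 0"
  shows "aggregation_step p q m n yh = t"
  unfolding aggregation_step_def
proof (rule the_equality)
  have L0: "Lpq_loss p q m n yh (\<lambda>i a. t a) = 0" using eq loss_zero_iff[OF pq] by auto
  show "(\<forall>a\<ge>n. t a = 0) \<and>
    (\<forall>s. (\<forall>a\<ge>n. s a = 0) \<longrightarrow>
         Lpq_loss p q m n yh (\<lambda>i a. t a) \<le> Lpq_loss p q m n yh (\<lambda>i a. s a)) \<and>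
    (\<forall>s. (\<forall>a\<ge>n. s a = 0) \<and>
         Lpq_loss p q m n yh (\<lambda>i a. s a) = Lpq_loss p q m n yh (\<lambda>i a. t a)
         \<longrightarrow> (\<Sum>a<n. (t a)\<^sup>2) \<le> (\<Sum>a<n. (s a)\<^sup>2))"
  proof (intro conjI)
    show "\<forall>a\<ge>n. t a = 0" by fact
    show "\<forall>s. (\<forall>a\<ge>n. s a = 0) \<longrightarrow>
         Lpq_loss p q m n yh (\<lambda>i a. t a) \<le> Lpq_loss p q m n yh (\<lambda>i a. s a)"
      using L0 loss_nonneg by simp
    show "\<forall>s. (\<forall>a\<ge>n. s a = 0) \<and>
         Lpq_loss p q m n yh (\<lambda>i a. s a) = Lpq_loss p q m n yh (\<lambda>i a. t a)
         \<longrightarrow> (\<Sum>a<n. (t a)\<^sup>2) \<le> (\<Sum>a<n. (s a)\<^sup>2)"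
    proof (intro allI impI)
      fix s assume "(\<forall>a\<ge>n. s a = 0) \<and>
         Lpq_loss p q m n yh (\<lambda>i a. s a) = Lpq_loss p q m n yh (\<lambda>i a. t a)"
      hence "\<forall>i<m. \<forall>a<n. yh i a = s a" using L0 loss_zero_iff[OF pq] by auto
      hence "\<forall>a<n. s a = t a" using eq m by auto
      hence "(\<Sum>a<n. (t a)\<^sup>2) = (\<Sum>a<n. (s a)\<^sup>2)" by (intro sum.cong refl) auto
      thus "(\<Sum>a<n. (t a)\<^sup>2) \<le> (\<Sum>a<n. (s a)\<^sup>2)" by simp
    qed
  qed
next
  fix s assume H: "(\<forall>a\<ge>n. s a = 0) \<and>
    (\<forall>t. (\<forall>a\<ge>n. t a = 0) \<longrightarrow>
         Lpq_loss p q m n yh (\<lambda>i a. s a) \<le> Lpq_loss p q m n yh (\<lambda>i a. t a)) \<and>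
    (\<forall>t. (\<forall>a\<ge>n. t a = 0) \<and>
         Lpq_loss p q m n yh (\<lambda>i a. t a) = Lpq_loss p q m n yh (\<lambda>i a. s a)
         \<longrightarrow> (\<Sum>a<n. (s a)\<^sup>2) \<le> (\<Sum>a<n. (t a)\<^sup>2))"
  have L0: "Lpq_loss p q m n yh (\<lambda>i a. t a) = 0" using eq loss_zero_iff[OF pq] by auto
  have "Lpq_loss p q m n yh (\<lambda>i a. s a) \<le> Lpq_loss p q m n yh (\<lambda>i a. t a)"
    using H t0 by blast
  hence "Lpq_loss p q m n yh (\<lambda>i a. s a) = 0"
    using L0 loss_nonneg[of p q m n yh "\<lambda>i a. s a"] by linarith
  hence "\<forall>i<m. \<forall>a<n. yh i a = s a" using loss_zero_iff[OF pq] by auto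
  hence e: "\<forall>a<n. s a = t a" using eq m by auto
  show "s = t"
  proof
    fix a show "s a = t a" using e H t0 by (cases "a < n") auto
  qed
qed

definition ptP :: "nat \<Rightarrow> real" where "ptP = (\<lambda>k. 5)"
definition ptQ :: "nat \<Rightarrow> real" where "ptQ = (\<lambda>k. if k = 0 then 0 else 10)"
definition ptP' :: "real \<Rightarrow> nat \<Rightarrow> real" where "ptP' e = (\<lambda>k. if k = 0 then 5 + e else 5 - e)"
definition ptQ' :: "real \<Rightarrow> nat \<Rightarrow> real" where "ptQ' e = (\<lambda>k. if k = 0 then e else 10 - e)"
definition X0 :: "nat \<Rightarrow> nat \<Rightarrow> nat \<Rightarrow> real" where
  "X0 i a = (if (i = 0 \<and> a = 0) \<or> (i = 1 \<and> a = 1) then ptP else ptQ)"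
definition X1 :: "real \<Rightarrow> nat \<Rightarrow> nat \<Rightarrow> nat \<Rightarrow> real" where
  "X1 e i a = (if i = 0 then (if a = 0 then ptP else ptQ) else (if a = 0 then ptQ' e else ptP' e))"
definition Y0 :: "nat \<Rightarrow> nat \<Rightarrow> real" where "Y0 i a = (if a = 1 then 10 else 0)"
definition up2 :: "(nat \<Rightarrow> real) \<Rightarrow> (nat \<Rightarrow> real) \<Rightarrow> (nat \<Rightarrow> real) \<Rightarrow> real" where
  "up2 z1 z2 u = (if (\<forall>k<2. z1 k \<le> u k) \<or> (\<forall>k<2. z2 k \<le> u k) then 10 else 0)"

lemma mono_up2: "monotonic_fn 2 (up2 z1 z2)"
  unfolding monotonic_fn_def up2_def
  by (auto intro: order_trans)

lemma mono_const: "0 \<le> c \<Longrightarrow> c \<le> 10 \<Longrightarrow> monotonic_fn d (\<lambda>u. c)"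
  unfolding monotonic_fn_def by auto


definition FF :: "real \<Rightarrow> real \<Rightarrow> real \<Rightarrow> real \<Rightarrow> real" where
  "FF p q c1 c2 = (c1 powr p + (10-c2) powr p) powr (q/p) + (c2 powr p + (10-c1) powr p) powr (q/p)"

lemma key_half:
  fixes p q c1 c2 :: real
  assumes p: "1 \<le> p" and q: "1 \<le> q" and c: "0 \<le> c1" "c1 \<le> 10" "0 \<le> c2" "c2 \<le> 10"
  shows "2 powr (q/p) * ((c1 + (10 - c2))/2) powr q \<le> (c1 powr p + (10-c2) powr p) powr (q/p)"
    and "1 < p \<Longrightarrow> c1 + c2 \<noteq> 10 \<Longrightarrow>
      2 powr (q/p) * ((c1 + (10 - c2))/2) powr q < (c1 powr p + (10-c2) powr p) powr (q/p)"
proof -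
  have B: "(2 * ((c1 + (10 - c2))/2) powr p) powr (q/p) = 2 powr (q/p) * ((c1 + (10 - c2))/2) powr q"
    using p c by (simp add: powr_mult powr_powr)
  have qp: "0 < q/p" using p q by simp
  show "2 powr (q/p) * ((c1 + (10 - c2))/2) powr q \<le> (c1 powr p + (10-c2) powr p) powr (q/p)"
    unfolding B[symmetric] using pm(1)[of p c1 "10 - c2"] p c qp
    by (intro powr_mono2) auto
  assume "1 < p" "c1 + c2 \<noteq> 10"
  thus "2 powr (q/p) * ((c1 + (10 - c2))/2) powr q < (c1 powr p + (10-c2) powr p) powr (q/p)"
    unfolding B[symmetric] using pm(2)[of p c1 "10 - c2"] p c qp
    by (intro powr_less_mono2) auto
qed

lemma key:
  fixes p q c1 c2 :: real
  assumes p: "1 \<le> p" and q: "1 \<le> q" and c: "0 \<le> c1" "c1 \<le> 10" "0 \<le> c2" "c2 \<le> 10"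
  shows "2 * 2 powr (q/p) * 5 powr q \<le> FF p q c1 c2"
    and "1 < p \<Longrightarrow> c1 + c2 \<noteq> 10 \<Longrightarrow> 2 * 2 powr (q/p) * 5 powr q < FF p q c1 c2"
proof -
  define u1 where "u1 = (c1 + (10 - c2))/2"
  define u2 where "u2 = (c2 + (10 - c1))/2"
  have u: "0 \<le> u1" "0 \<le> u2" "(u1 + u2)/2 = 5" using c by (auto simp: u1_def u2_def field_simps)
  have low: "2 * 2 powr (q/p) * 5 powr q \<le> 2 powr (q/p) * (u1 powr q + u2 powr q)"
    using pm(1)[OF q u(1) u(2)] u(3) by simp
  have "2 powr (q/p) * (u1 powr q + u2 powr q) \<le> FF p q c1 c2"
    using key_half(1)[OF p q c] key_half(1)[OF p q c(3,4,1,2)]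
    unfolding FF_def u1_def u2_def by (simp add: distrib_left)
  thus "2 * 2 powr (q/p) * 5 powr q \<le> FF p q c1 c2" using low by linarith
  assume "1 < p" "c1 + c2 \<noteq> 10"
  hence "2 powr (q/p) * (u1 powr q + u2 powr q) < FF p q c1 c2"
    using key_half(2)[OF p q c] key_half(1)[OF p q c(3,4,1,2)]
    unfolding FF_def u1_def u2_def by (simp add: distrib_left)
  thus "2 * 2 powr (q/p) * 5 powr q < FF p q c1 c2" using low by linarith
qed

lemma FF55: "1 \<le> p \<Longrightarrow> FF p q 5 5 = 2 * 2 powr (q/p) * 5 powr q"
  unfolding FF_def by (simp add: powr_mult powr_powr)

lemma FF00: "FF 1 q 0 0 = 2 * 2 powr q * 5 powr q"
  unfolding FF_def by (simp add: powr_mult[symmetric])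


lemma loss_form:
  fixes v :: "nat \<Rightarrow> nat \<Rightarrow> real"
  assumes "v 0 0 = c1" "v 1 1 = c1" "v 0 1 = c2" "v 1 0 = c2"
    "0 \<le> c1" "c1 \<le> 10" "0 \<le> c2" "c2 \<le> 10"
  shows "Lpq_loss p q 2 2 Y0 v = (FF p q c1 c2) powr (1/q)"
  unfolding Lpq_loss_def FF_def using assms by (simp add: numeral_2_eq_2 Y0_def)

lemma sqnorm_form:
  "sqnorm2 2 2 w = (w 0 0)\<^sup>2 + (w 0 1)\<^sup>2 + (w 1 0)\<^sup>2 + (w 1 1)\<^sup>2"
  unfolding sqnorm2_def by (simp add: numeral_2_eq_2)

lemma box_PQ: "ptP \<in> score_box 2" "ptQ \<in> score_box 2"
  unfolding score_box_def ptP_def ptQ_def by auto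

lemma feas_X0:
  assumes "erm_feasible 2 2 2 X0 w"
  shows "\<exists>c1 c2. 0 \<le> c1 \<and> c1 \<le> 10 \<and> 0 \<le> c2 \<and> c2 \<le> 10 \<and>
     w 0 0 = c1 \<and> w 1 1 = c1 \<and> w 0 1 = c2 \<and> w 1 0 = c2 \<and>
     (\<forall>i a. 2 \<le> i \<or> 2 \<le> a \<longrightarrow> w i a = 0)"
proof -
  obtain h where h: "monotonic_fn 2 h" "\<forall>i<2. \<forall>a<2. w i a = h (X0 i a)"
    and z: "\<forall>i a. 2 \<le> i \<or> 2 \<le> a \<longrightarrow> w i a = 0"
    using assms unfolding erm_feasible_def by blast
  have b: "0 \<le> h ptP" "h ptP \<le> 10" "0 \<le> h ptQ" "h ptQ \<le> 10"
    using h(1) box_PQ unfolding monotonic_fn_def by auto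
  have "w 0 0 = h ptP" "w 1 1 = h ptP" "w 0 1 = h ptQ" "w 1 0 = h ptQ"
    using h(2) by (auto simp: X0_def)
  thus ?thesis using b z by blast
qed

lemma erm_X0:
  fixes p q :: real
  assumes p: "1 \<le> p" and q: "1 \<le> q"
  defines "k \<equiv> (if p = 1 then 0 else 5::real)"
  shows "erm_step p q 2 2 2 X0 Y0 = (\<lambda>i a. if i < 2 \<and> a < 2 then k else 0)"
proof -
  define vs :: "nat \<Rightarrow> nat \<Rightarrow> real" where "vs = (\<lambda>i a. if i < 2 \<and> a < 2 then k else 0)"
  define Fm where "Fm = 2 * 2 powr (q/p) * 5 powr q"
  have k: "0 \<le> k" "k \<le> 10" by (auto simp: k_def)
  have fvs: "erm_feasible 2 2 2 X0 vs"
    unfolding erm_feasible_def vs_def using mono_const[OF k] by auto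
  have Lvs: "Lpq_loss p q 2 2 Y0 vs = Fm powr (1/q)"
  proof (cases "p = 1")
    case True
    hence "Lpq_loss p q 2 2 Y0 vs = (FF p q 0 0) powr (1/q)"
      by (intro loss_form) (auto simp: vs_def k_def)
    thus ?thesis using True FF00 by (simp add: Fm_def)
  next
    case False
    hence "Lpq_loss p q 2 2 Y0 vs = (FF p q 5 5) powr (1/q)"
      by (intro loss_form) (auto simp: vs_def k_def)
    thus ?thesis using FF55[OF p] by (simp add: Fm_def)
  qed
  have Fm0: "0 \<le> Fm" by (simp add: Fm_def)
  have lowL: "Fm powr (1/q) \<le> Lpq_loss p q 2 2 Y0 w" if fw: "erm_feasible 2 2 2 X0 w" for w
  proof -
    obtain c1 c2 where c: "0 \<le> c1" "c1 \<le> 10" "0 \<le> c2" "c2 \<le> 10"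
      "w 0 0 = c1" "w 1 1 = c1" "w 0 1 = c2" "w 1 0 = c2"
      using feas_X0[OF fw] by blast
    have "Lpq_loss p q 2 2 Y0 w = (FF p q c1 c2) powr (1/q)"
      using c by (intro loss_form) auto
    moreover have "Fm \<le> FF p q c1 c2" using key(1)[OF p q c(1-4)] by (simp add: Fm_def)
    ultimately show ?thesis using Fm0 q by (simp add: powr_mono2)
  qed
  have sum10: "c1 + c2 = 10" if "erm_feasible 2 2 2 X0 w" "Lpq_loss p q 2 2 Y0 w = Fm powr (1/q)"
     "p \<noteq> 1" "w 0 0 = c1" "w 1 1 = c1" "w 0 1 = c2" "w 1 0 = c2"
     "0 \<le> c1" "c1 \<le> 10" "0 \<le> c2" "c2 \<le> 10" for w c1 c2
  proof (rule ccontr)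
    assume ne: "c1 + c2 \<noteq> 10"
    have "Lpq_loss p q 2 2 Y0 w = (FF p q c1 c2) powr (1/q)"
      using that by (intro loss_form) auto
    moreover have "Fm < FF p q c1 c2" using key(2)[OF p q that(8-11)] p that(3) ne
      by (simp add: Fm_def)
    ultimately have "Fm powr (1/q) < Lpq_loss p q 2 2 Y0 w" using Fm0 q
      by (simp add: powr_less_mono2)
    thus False using that(2) by simp
  qed
  show ?thesis
    unfolding erm_step_def vs_def[symmetric]
  proof (rule the_equality)
    show "erm_feasible 2 2 2 X0 vs \<and>
      (\<forall>w. erm_feasible 2 2 2 X0 w \<longrightarrow> Lpq_loss p q 2 2 Y0 vs \<le> Lpq_loss p q 2 2 Y0 w) \<and>
      (\<forall>w. erm_feasible 2 2 2 X0 w \<and> Lpq_loss p q 2 2 Y0 w = Lpq_loss p q 2 2 Y0 vs \<longrightarrow>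
           sqnorm2 2 2 vs \<le> sqnorm2 2 2 w)"
    proof (intro conjI allI impI)
      show "erm_feasible 2 2 2 X0 vs" by fact
    next
      fix w assume "erm_feasible 2 2 2 X0 w"
      thus "Lpq_loss p q 2 2 Y0 vs \<le> Lpq_loss p q 2 2 Y0 w" using lowL Lvs by simp
    next
      fix w assume w: "erm_feasible 2 2 2 X0 w \<and> Lpq_loss p q 2 2 Y0 w = Lpq_loss p q 2 2 Y0 vs"
      obtain c1 c2 where c: "0 \<le> c1" "c1 \<le> 10" "0 \<le> c2" "c2 \<le> 10"
        "w 0 0 = c1" "w 1 1 = c1" "w 0 1 = c2" "w 1 0 = c2"
        using feas_X0 w by blast
      show "sqnorm2 2 2 vs \<le> sqnorm2 2 2 w"
      proof (cases "p = 1")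
        case True
        thus ?thesis by (simp add: sqnorm_form vs_def k_def)
      next
        case False
        have "c1 + c2 = 10" using sum10[of w c1 c2] w c Lvs False by auto
        hence c2e: "c2 = 10 - c1" by simp
        have "2 * c1\<^sup>2 + 2 * c2\<^sup>2 - 100 = (c1 - c2)\<^sup>2"
          unfolding c2e by (simp add: power2_eq_square algebra_simps)
        moreover have "0 \<le> (c1 - c2)\<^sup>2" by simp
        ultimately have "100 \<le> 2 * c1\<^sup>2 + 2 * c2\<^sup>2" by linarith
        thus ?thesis using False c by (simp add: sqnorm_form vs_def k_def)
      qed
    qed
  next
    fix v assume H: "erm_feasible 2 2 2 X0 v \<and>
      (\<forall>w. erm_feasible 2 2 2 X0 w \<longrightarrow> Lpq_loss p q 2 2 Y0 v \<le> Lpq_loss p q 2 2 Y0 w) \<and>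
      (\<forall>w. erm_feasible 2 2 2 X0 w \<and> Lpq_loss p q 2 2 Y0 w = Lpq_loss p q 2 2 Y0 v \<longrightarrow>
           sqnorm2 2 2 v \<le> sqnorm2 2 2 w)"
    obtain c1 c2 where c: "0 \<le> c1" "c1 \<le> 10" "0 \<le> c2" "c2 \<le> 10"
        "v 0 0 = c1" "v 1 1 = c1" "v 0 1 = c2" "v 1 0 = c2"
        and z: "\<forall>i a. 2 \<le> i \<or> 2 \<le> a \<longrightarrow> v i a = 0"
      using feas_X0 H by blast
    have "Lpq_loss p q 2 2 Y0 v \<le> Lpq_loss p q 2 2 Y0 vs" using H fvs by blast
    hence Lv: "Lpq_loss p q 2 2 Y0 v = Fm powr (1/q)" using lowL H Lvs by force
    have sq: "sqnorm2 2 2 v \<le> sqnorm2 2 2 vs" using H fvs Lv Lvs by force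
    have vals: "c1 = k \<and> c2 = k"
    proof (cases "p = 1")
      case True
      hence "c1\<^sup>2 + c2\<^sup>2 + c2\<^sup>2 + c1\<^sup>2 \<le> 0" using sq c by (simp add: sqnorm_form vs_def k_def)
      moreover have "0 \<le> c1\<^sup>2" "0 \<le> c2\<^sup>2" by simp_all
      ultimately have "c1\<^sup>2 = 0" "c2\<^sup>2 = 0" by linarith+
      hence "c1 = 0 \<and> c2 = 0" by simp
      thus ?thesis using True by (simp add: k_def)
    next
      case False
      have s: "c1 + c2 = 10" using sum10[of v c1 c2] H c Lv False by auto
      have "c1\<^sup>2 + c2\<^sup>2 + c2\<^sup>2 + c1\<^sup>2 \<le> 100" using sq c False
        by (simp add: sqnorm_form vs_def k_def)
      moreover have c2e: "c2 = 10 - c1" using s by simp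
      moreover have "2 * c1\<^sup>2 + 2 * c2\<^sup>2 - 100 = (c1 - c2)\<^sup>2"
          unfolding c2e by (simp add: power2_eq_square algebra_simps)
      ultimately have "(c1 - c2)\<^sup>2 \<le> 0" by linarith
      hence "c1 = c2" by simp
      thus ?thesis using s False by (simp add: k_def)
    qed
    show "v = vs"
    proof (intro ext)
      fix i a
      show "v i a = vs i a"
      proof (cases "i < 2 \<and> a < 2")
        case True
        hence "i = 0 \<or> i = 1" "a = 0 \<or> a = 1" by auto
        thus ?thesis using c vals by (auto simp: vs_def)
      next
        case False
        thus ?thesis using z by (auto simp: vs_def)
      qed
    qed
  qed
qed


lemma up2_vals:
  assumes e: "0 < e" "e \<le> 1"
  shows "up2 ptQ (ptP' e) ptP = 0" "up2 ptQ (ptP' e) ptQ = 10"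
    "up2 ptQ (ptP' e) (ptQ' e) = 0" "up2 ptQ (ptP' e) (ptP' e) = 10"
    "up2 ptQ ptQ ptP = 0" "up2 ptQ ptQ ptQ = 10" "up2 ptP ptP ptQ = 0" "up2 ptP ptP ptP = 10"
  using e by (simp_all add: up2_def all2 ptP_def ptQ_def ptP'_def ptQ'_def)

lemma method_X1:
  fixes p q e :: real
  assumes p: "1 \<le> p" and q: "1 \<le> q" and e: "0 < e" "e \<le> 1"
  shows "Lpq_method p q 2 2 2 (X1 e) Y0 = (\<lambda>a. if a < 2 then (if a = 1 then 10 else 0) else 0)"
proof -
  define v0 :: "nat \<Rightarrow> nat \<Rightarrow> real" where "v0 = (\<lambda>i a. if i < 2 \<and> a < 2 then Y0 i a else 0)"
  have pq: "0 < p" "0 < q" using p q by auto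
  have hv: "\<forall>i<2. \<forall>a<2. v0 i a = up2 ptQ (ptP' e) (X1 e i a)"
    using up2_vals[OF e] by (auto simp: all2 v0_def X1_def Y0_def)
  have feas: "erm_feasible 2 2 2 (X1 e) v0"
    unfolding erm_feasible_def
    apply (rule conjI)
     apply (rule exI[of _ "up2 ptQ (ptP' e)"])
    using mono_up2 hv apply blast
    by (simp add: v0_def)
  have E: "erm_step p q 2 2 2 (X1 e) Y0 = v0"
    by (rule erm_zero[OF pq feas]) (auto simp: v0_def)
  show ?thesis unfolding Lpq_method_def E
    by (rule agg_zero[OF pq]) (auto simp: v0_def Y0_def all2)
qed

lemma method_X0:
  fixes p q :: real
  assumes p: "1 \<le> p" and q: "1 \<le> q"
  shows "Lpq_method p q 2 2 2 X0 Y0 = (\<lambda>a. if a < 2 then (if p = 1 then 0 else 5) else 0)"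
proof -
  have pq: "0 < p" "0 < q" using p q by auto
  show ?thesis unfolding Lpq_method_def erm_X0[OF p q]
    by (rule agg_zero[OF pq]) auto
qed

theorem theorem4p5:
  fixes p q :: real
  assumes "1 \<le> p" and "1 \<le> q"
  shows "\<exists>(d::nat) (m::nat) (n::nat) (x::nat \<Rightarrow> nat \<Rightarrow> nat \<Rightarrow> real) (y::nat \<Rightarrow> nat \<Rightarrow> real).
     1 \<le> d \<and>
     (\<forall>i<m. \<forall>a<n. x i a \<in> score_box d) \<and>
     (\<forall>i<m. \<exists>h. monotonic_fn d h \<and> (\<forall>a<n. y i a = h (x i a))) \<and>
     (\<exists>\<epsilon>>0. \<forall>\<delta>>0. \<exists>x'::nat \<Rightarrow> nat \<Rightarrow> nat \<Rightarrow> real.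
        (\<forall>i<m. \<forall>a<n. x' i a \<in> score_box d) \<and>
        (\<forall>i<m. \<forall>a<n. \<forall>k<d. \<bar>x' i a k - x i a k\<bar> < \<delta>) \<and>
        (\<exists>a<n. \<epsilon> \<le> \<bar>Lpq_method p q d m n x' y a - Lpq_method p q d m n x y a\<bar>))"
proof (rule exI[of _ 2], rule exI[of _ 2], rule exI[of _ 2], rule exI[of _ X0], rule exI[of _ Y0],
    intro conjI)
  show "1 \<le> (2::nat)" by simp
  show "\<forall>i<2. \<forall>a<2. X0 i a \<in> score_box 2" using box_PQ by (simp add: X0_def)
  show "\<forall>i<2. \<exists>h. monotonic_fn 2 h \<and> (\<forall>a<2. Y0 i a = h (X0 i a))"
  proof (intro allI impI)
    fix i :: nat assume "i < 2"
    hence "i = 0 \<or> i = 1" by auto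
    thus "\<exists>h. monotonic_fn 2 h \<and> (\<forall>a<2. Y0 i a = h (X0 i a))"
    proof
      assume "i = 0"
      thus ?thesis using mono_up2[of ptQ ptQ] up2_vals(5,6)[of 1]
        by (intro exI[of _ "up2 ptQ ptQ"]) (auto simp: all2 X0_def Y0_def)
    next
      assume "i = 1"
      thus ?thesis using mono_up2[of ptP ptP] up2_vals(7,8)[of 1]
        by (intro exI[of _ "up2 ptP ptP"]) (auto simp: all2 X0_def Y0_def)
    qed
  qed
  show "\<exists>\<epsilon>>0. \<forall>\<delta>>0. \<exists>x'::nat \<Rightarrow> nat \<Rightarrow> nat \<Rightarrow> real.
        (\<forall>i<2. \<forall>a<2. x' i a \<in> score_box 2) \<and>
        (\<forall>i<2. \<forall>a<2. \<forall>k<2. \<bar>x' i a k - X0 i a k\<bar> < \<delta>) \<and>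
        (\<exists>a<2. \<epsilon> \<le> \<bar>Lpq_method p q 2 2 2 x' Y0 a - Lpq_method p q 2 2 2 X0 Y0 a\<bar>)"
  proof (intro exI[of _ 5] conjI allI impI)
    show "(0::real) < 5" by simp
    fix \<delta> :: real assume d: "0 < \<delta>"
    define e where "e = min (\<delta>/2) 1"
    have e: "0 < e" "e \<le> 1" "e < \<delta>" using d by (auto simp: e_def)
    show "\<exists>x'::nat \<Rightarrow> nat \<Rightarrow> nat \<Rightarrow> real.
        (\<forall>i<2. \<forall>a<2. x' i a \<in> score_box 2) \<and>
        (\<forall>i<2. \<forall>a<2. \<forall>k<2. \<bar>x' i a k - X0 i a k\<bar> < \<delta>) \<and>
        (\<exists>a<2. 5 \<le> \<bar>Lpq_method p q 2 2 2 x' Y0 a - Lpq_method p q 2 2 2 X0 Y0 a\<bar>)"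
    proof (intro exI[of _ "X1 e"] conjI)
      show "\<forall>i<2. \<forall>a<2. X1 e i a \<in> score_box 2"
        using e by (auto simp: all2 X1_def score_box_def ptP_def ptQ_def ptP'_def ptQ'_def)
      show "\<forall>i<2. \<forall>a<2. \<forall>k<2. \<bar>X1 e i a k - X0 i a k\<bar> < \<delta>"
        using e d by (auto simp: all2 X1_def X0_def ptP_def ptQ_def ptP'_def ptQ'_def)
      show "\<exists>a<2. 5 \<le> \<bar>Lpq_method p q 2 2 2 (X1 e) Y0 a - Lpq_method p q 2 2 2 X0 Y0 a\<bar>"
        using method_X1[OF assms e(1,2)] method_X0[OF assms]
        by (intro exI[of _ 1]) auto
    qed
  qed
qed

end
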